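(* Under the same setting over $\mathbb{F}_2$ (leader set $\mathcal L$ with $|\mathcal L|=\mathrm{rank}_2(\mathbb{D}_{\mathcal L})=\mathrm{rank}_2(\mathbb{D})$, $\mathcal A\subseteq[{\mathsf K}]\setminus\mathcal L$ with $|\mathcal A|=t+1$, $\mathcal B=\mathcal L\cup\mathcal A$), for every choice of the subfiles $F_{i,\mathcal W}$, $$\bigoplus_{\mathcal V\in\mathscr V_{\mathcal B}}W_{\mathcal B\setminus\mathcal V}=0,\qquad\text{and consequently}\qquad W_{\mathcal A}=\bigoplus_{\mathcal V\in\mathscr V_{\mathcal B},\ \mathcal V\neq\mathcal L}W_{\mathcal B\setminus\mathcal V},$$ where every message on the right-hand side satisfies $(\mathcal B\setminus\mathcal V)\cap\mathcal L\neq\emptyset$.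
   Context: $\mathbb{D}\in\mathbb{F}_2^{{\mathsf K}\times{\mathsf N}}$ has rows $\mathbf y_k=(y_{k,1},\ldots,y_{k,{\mathsf N}})$; $\mathbb{D}_{\mathcal S}$ is the submatrix of rows indexed by $\mathcal S$; $t\in\{0,\ldots,{\mathsf K}-1\}$. Subfiles $F_{i,\mathcal W}$ ($i\in[{\mathsf N}]$, $\mathcal W\subseteq[{\mathsf K}]$, $|\mathcal W|=t$) are vectors over $\mathbb{F}_2$ of a common length. Blocks $B_{k,\mathcal W}=\sum_{n}y_{k,n}F_{n,\mathcal W}$. For $|\mathcal S|=t+1$, $W_{\mathcal S}=\bigoplus_{k\in\mathcal S}B_{k,\mathcal S\setminus\{k\}}$. $\mathscr V_{\mathcal B}$ is the family of subsets $\mathcal V\subseteq\mathcal B$ with $|\mathcal V|=|\mathcal L|$ and $\mathrm{rank}_2(\mathbb{D}_{\mathcal V})=|\mathcal L|$ (so $\mathcal L\in\mathscr V_{\mathcal B}$ and $W_{\mathcal B\setminus\mathcal L}=W_{\mathcal A}$). *)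

theory Defs
  imports "HOL-Library.Z2" "Jordan_Normal_Form.DL_Rank" "Jordan_Normal_Form.DL_Submatrix"
begin

text \<open>Conventions: the matrix D has dim_row D = K rows and dim_col D = N columns over
  the field F_2 = bit; users/rows are indexed 0..K-1 and files/columns 0..N-1.
  Subfiles F i W are vectors over F_2 of a common length, modelled as functions
  'm => bit for a finite index type 'm.\<close>

definition rank2 :: "bit mat \<Rightarrow> nat" where
  "rank2 A = vec_space.rank (dim_row A) A"

definition rowsub :: "bit mat \<Rightarrow> nat set \<Rightarrow> bit mat" where
  "rowsub D S = submatrix D S {..<dim_col D}"

definition blk :: "bit mat \<Rightarrow> (nat \<Rightarrow> nat set \<Rightarrow> 'm \<Rightarrow> bit) \<Rightarrow> nat \<Rightarrow> nat set \<Rightarrow> 'm \<Rightarrow> bit" where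
  "blk D F k W = (\<lambda>j. \<Sum>n<dim_col D. D $$ (k, n) * F n W j)"

definition msg :: "bit mat \<Rightarrow> (nat \<Rightarrow> nat set \<Rightarrow> 'm \<Rightarrow> bit) \<Rightarrow> nat set \<Rightarrow> 'm \<Rightarrow> bit" where
  "msg D F S = (\<lambda>j. \<Sum>k\<in>S. blk D F k (S - {k}) j)"

definition Vfam :: "bit mat \<Rightarrow> nat set \<Rightarrow> nat set \<Rightarrow> nat set set" where
  "Vfam D L B = {V. V \<subseteq> B \<and> card V = card L \<and> rank2 (rowsub D V) = card L}"

end

theory Submission
  imports Defs
begin


lemma bit_add_self: "(x::bit) + x = 0" by (cases x) simp_all

definition indep :: "bit mat \<Rightarrow> nat set \<Rightarrow> bool" where
  "indep M V \<longleftrightarrow> (\<forall>Q\<subseteq>V. Q \<noteq> {} \<longrightarrow> (\<exists>n<dim_col M. (\<Sum>k\<in>Q. M $$ (k,n)) \<noteq> 0))"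

lemma indepD: "indep D V \<Longrightarrow> Q \<subseteq> V \<Longrightarrow> Q \<noteq> {} \<Longrightarrow> \<exists>n<dim_col D. (\<Sum>k\<in>Q. D $$ (k,n)) \<noteq> 0"
  unfolding indep_def by blast

context vec_space begin
lemma max_cols_exists: "\<exists>S. maximal S (\<lambda>T. T \<subseteq> set (cols A) \<and> lin_indpt T)"
  using maximal_exists[of "\<lambda>T. T \<subseteq> set (cols A) \<and> lin_indpt T" "card (set (cols A))" "{}"]
  by (meson List.finite_set card_mono empty_iff empty_subsetI finite_lin_indpt2 rev_finite_subset)
end

lemma indep_inj_rows:
  assumes M: "M \<in> carrier_mat nr nc" and Q: "Q \<subseteq> {..<nr}" and ind: "indep M Q"
  shows "inj_on (row M) Q"
proof (rule inj_onI, rule ccontr)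
  fix k k' assume k: "k \<in> Q" "k' \<in> Q" "row M k = row M k'" "k \<noteq> k'"
  have "{k,k'} \<subseteq> Q" "{k,k'} \<noteq> {}" using k by auto
  then obtain n where n: "n < dim_col M" "(\<Sum>i\<in>{k,k'}. M $$ (i,n)) \<noteq> 0"
    using ind unfolding indep_def by blast
  have "M $$ (k,n) = M $$ (k',n)"
    using k Q n M by (metis (no_types, lifting) index_row(1) carrier_matD(1) lessThan_iff subsetD)
  then show False using n k(4) by (simp add: bit_add_self del: add_bit_eq_xor)
qed

lemma indep_lin_indpt_rows:
  assumes M: "M \<in> carrier_mat nr nc" and Q: "Q \<subseteq> {..<nr}" and ind: "indep M Q"
  shows "\<not> module.lin_dep class_ring (module_vec TYPE(bit) nc) (row M ` Q)"
proof
  interpret R: vec_space "TYPE(bit)" nc .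
  have inj: "inj_on (row M) Q" by (rule indep_inj_rows[OF M Q ind])
  have finQ: "finite Q" using Q finite_subset by blast
  have car: "row M ` Q \<subseteq> carrier_vec nc" using M by auto
  assume "R.lin_dep (row M ` Q)"
  then obtain a v where a: "R.lincomb a (row M ` Q) = 0\<^sub>v nc" "v \<in> row M ` Q" "a v \<noteq> 0"
    using R.finite_lin_dep[OF finite_imageI[OF finQ] _ car] by auto
  define P where "P = {k\<in>Q. a (row M k) = 1}"
  have "P \<subseteq> Q" "P \<noteq> {}" using a(2,3) unfolding P_def by auto
  then obtain n where n: "n < dim_col M" "(\<Sum>k\<in>P. M $$ (k,n)) \<noteq> 0"
    using ind unfolding indep_def by blast
  have nnc: "n < nc" using n M by auto
  have "0 = R.lincomb a (row M ` Q) $ n" using a(1) nnc by simp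
  also have "\<dots> = (\<Sum>w\<in>row M ` Q. a w * w $ n)" using R.lincomb_index[OF nnc car] .
  also have "\<dots> = (\<Sum>k\<in>Q. a (row M k) * row M k $ n)" using sum.reindex[OF inj] by simp
  also have "\<dots> = (\<Sum>k\<in>Q. if a (row M k) = 1 then M $$ (k,n) else 0)"
    apply (rule sum.cong[OF refl])
    subgoal for k using Q M nnc by (cases "a (row M k)") (auto simp del: mult_bit_eq_and)
    done
  also have "\<dots> = (\<Sum>k\<in>P. M $$ (k,n))" unfolding P_def using finQ by (simp add: sum.inter_filter)
  finally show False using n(2) by simp
qed


lemma rank_ge_indep:
  assumes M: "M \<in> carrier_mat nr nc" and Q: "Q \<subseteq> {..<nr}" and ind: "indep M Q"
  shows "card Q \<le> rank2 M"
proof -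
  interpret C: vec_space "TYPE(bit)" nr .
  interpret R: vec_space "TYPE(bit)" nc .
  obtain S where S: "maximal S (\<lambda>T. T \<subseteq> set (cols M) \<and> C.lin_indpt T)"
    using C.max_cols_exists by blast
  have rk: "rank2 M = card S" unfolding rank2_def using C.rank_card_indpt[OF _ S] M by auto
  have Ssub: "S \<subseteq> set (cols M)" and Sind: "C.lin_indpt S" using S unfolding maximal_def by auto
  have finS: "finite S" using Ssub finite_subset by blast
  have Scar: "S \<subseteq> carrier_vec nr" using Ssub M cols_dim by blast
  have inspan: "col M j \<in> C.span S" if j: "j < nc" for j
  proof (cases "col M j \<in> S")
    case True then show ?thesis using C.in_own_span[OF Scar] by auto
  next
    case False
    have cM: "col M j \<in> set (cols M)" using j M by (simp add: cols_def)
    have "C.lin_dep (S \<union> {col M j})"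
    proof (rule ccontr)
      assume "C.lin_indpt (S \<union> {col M j})"
      then have "S \<union> {col M j} = S" using S cM Ssub unfolding maximal_def by blast
      then show False using False by auto
    qed
    then show ?thesis using C.lin_dep_iff_in_span[OF Scar Sind _ False] M j by auto
  qed
  have "\<forall>j\<in>{..<nc}. \<exists>a. C.lincomb a S = col M j"
    using C.finite_in_span[OF finS Scar] inspan by blast
  then obtain a where a: "\<And>j. j < nc \<Longrightarrow> C.lincomb (a j) S = col M j" by (metis lessThan_iff)
  define g where "g s = vec nc (\<lambda>j. a j s)" for s
  define G where "G = g ` S"
  have Gcar: "G \<subseteq> carrier_vec nc" unfolding G_def g_def by auto
  have finG: "finite G" unfolding G_def using finS by simp
  have entry: "M $$ (i,j) = (\<Sum>s\<in>S. a j s * s $ i)" if "i<nr" "j<nc" for i j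
    using C.lincomb_index[OF that(1) Scar, of "a j"] a[OF that(2)] that M by simp
  have rowin: "row M i \<in> R.span G" if i: "i < nr" for i
  proof -
    define c where "c h = (\<Sum>s\<in>{s\<in>S. g s = h}. s $ i)" for h
    have "row M i = R.lincomb c G"
    proof (rule eq_vecI)
      fix j assume "j < dim_vec (R.lincomb c G)"
      then have j: "j < nc" using R.lincomb_dim[OF finG Gcar] by simp
      have "R.lincomb c G $ j = (\<Sum>h\<in>G. c h * h $ j)" by (rule R.lincomb_index[OF j Gcar])
      also have "\<dots> = (\<Sum>h\<in>G. \<Sum>s\<in>{s\<in>S. g s = h}. s $ i * h $ j)"
        by (simp only: c_def sum_distrib_right)
      also have "\<dots> = (\<Sum>h\<in>G. \<Sum>s\<in>{s\<in>S. g s = h}. s $ i * g s $ j)"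
        by (intro sum.cong refl) (simp only: mem_Collect_eq)
      also have "\<dots> = (\<Sum>s\<in>S. s $ i * g s $ j)" unfolding G_def by (rule sum.image_gen[symmetric, OF finS])
      also have "\<dots> = (\<Sum>s\<in>S. a j s * s $ i)" by (intro sum.cong refl) (metis g_def index_vec j mult.commute)
      also have "\<dots> = M $$ (i,j)" using entry[OF i j] by (rule sym)
      finally show "row M i $ j = R.lincomb c G $ j" using i j M by (metis carrier_matD(1) carrier_matD(2) index_row(1))
    next
      show "dim_vec (row M i) = dim_vec (R.lincomb c G)"
        using R.lincomb_dim[OF finG Gcar, of c] M by simp
    qed
    then show ?thesis by (rule R.in_spanI[OF _ finG subset_refl])
  qed
  have finQ: "finite Q" using Q finite_subset by blast
  have Rind: "R.lin_indpt (row M ` Q)" using indep_lin_indpt_rows[OF M Q ind] .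
  have sp: "row M ` Q \<subseteq> R.span G" using rowin Q by auto
  have "\<exists>C'::bit vec set. int (card C') \<le> int (card G) - int (card (row M ` Q))"
    using R.replacement[OF finite_imageI[OF finQ] finG Gcar Rind sp] by meson
  then obtain C' :: "bit vec set" where "int (card C') \<le> int (card G) - int (card (row M ` Q))"
    by blast
  then have "card (row M ` Q) \<le> card G" by linarith
  moreover have "card (row M ` Q) = card Q" using card_image indep_inj_rows[OF M Q ind] by blast
  moreover have "card G \<le> card S" unfolding G_def using card_image_le finS by blast
  ultimately show ?thesis using rk by linarith
qed


lemma rank_le_rows:
  assumes M: "M \<in> carrier_mat nr nc"
  shows "rank2 M \<le> nr"
proof -
  interpret C: vec_space "TYPE(bit)" nr .
  obtain S where S: "maximal S (\<lambda>T. T \<subseteq> set (cols M) \<and> C.lin_indpt T)"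
    using C.max_cols_exists by blast
  have rk: "rank2 M = card S" unfolding rank2_def using C.rank_card_indpt[OF _ S] M by auto
  have Ssub: "S \<subseteq> set (cols M)" and Sind: "C.lin_indpt S" using S unfolding maximal_def by auto
  have Scar: "S \<subseteq> carrier_vec nr" using Ssub M cols_dim by blast
  have "card S \<le> C.dim" using C.li_le_dim(2)[OF C.fin_dim _ Sind] Scar by simp
  then show ?thesis using rk C.dim_is_n by simp
qed

lemma full_rank_indep:
  assumes M: "M \<in> carrier_mat nr nc" and rk: "rank2 M = nr"
  shows "indep M {..<nr}"
  unfolding indep_def
proof (intro allI impI)
  fix Q assume Q: "Q \<subseteq> {..<nr}" "Q \<noteq> {}"
  show "\<exists>n<dim_col M. (\<Sum>k\<in>Q. M $$ (k, n)) \<noteq> 0"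
  proof (rule ccontr)
    assume "\<not> ?thesis"
    then have z: "\<And>n. n < nc \<Longrightarrow> (\<Sum>k\<in>Q. M $$ (k, n)) = 0" using M by auto
    interpret C: vec_space "TYPE(bit)" nr .
    obtain S where S: "maximal S (\<lambda>T. T \<subseteq> set (cols M) \<and> C.lin_indpt T)"
      using C.max_cols_exists by blast
    have rk2: "rank2 M = card S" unfolding rank2_def using C.rank_card_indpt[OF _ S] M by auto
    have Ssub: "S \<subseteq> set (cols M)" and Sind: "C.lin_indpt S" using S unfolding maximal_def by auto
    have finS: "finite S" using Ssub finite_subset by blast
    have Scar: "S \<subseteq> carrier_vec nr" using Ssub M cols_dim by blast
    have "C.basis S" using C.dim_li_is_basis[OF C.fin_dim finS _ Sind] Scar rk rk2 C.dim_is_n by simp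
    then have spanS: "C.span S = carrier_vec nr" unfolding C.basis_def by simp
    obtain i0 where i0: "i0 \<in> Q" using Q by blast
    have finQ: "finite Q" using Q finite_subset by blast
    have i0nr: "i0 < nr" using i0 Q by auto
    have "unit_vec nr i0 \<in> C.span S" using spanS i0nr by simp
    then obtain a where a: "C.lincomb a S = unit_vec nr i0"
      using C.finite_in_span[OF finS Scar] by blast
    have "(1::bit) = (\<Sum>i\<in>Q. unit_vec nr i0 $ i)"
    proof -
      have "(\<Sum>i\<in>Q. unit_vec nr i0 $ i) = (\<Sum>i\<in>Q. if i = i0 then 1 else 0)"
      proof (intro sum.cong refl)
        fix i assume "i \<in> Q"
        then have "i < nr" using Q by auto
        then show "unit_vec nr i0 $ i = (if i = i0 then 1 else 0)" using i0nr by simp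
      qed
      also have "\<dots> = 1" using finQ i0 by simp
      finally show ?thesis by simp
    qed
    also have "\<dots> = (\<Sum>i\<in>Q. \<Sum>s\<in>S. a s * s $ i)"
      by (intro sum.cong refl) (use Q in \<open>metis a C.lincomb_index[OF _ Scar] lessThan_iff subsetD\<close>)
    also have "\<dots> = (\<Sum>s\<in>S. a s * (\<Sum>i\<in>Q. s $ i))"
      by (simp only: sum_distrib_left sum.swap[of _ Q])
    also have "\<dots> = 0"
    proof (intro sum.neutral ballI)
      fix s assume "s \<in> S"
      then obtain j where j: "j < nc" "s = col M j" using Ssub M by (auto simp: cols_def)
      have "(\<Sum>i\<in>Q. s $ i) = (\<Sum>i\<in>Q. M $$ (i,j))"
        by (intro sum.cong refl) (use Q M j in auto)
      then show "a s * (\<Sum>i\<in>Q. s $ i) = 0" using z[OF j(1)] by simp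
    qed
    finally show False by simp
  qed
qed




lemma pick_bij:
  assumes "finite V"
  shows "bij_betw (pick V) {..<card V} V"
proof -
  have inj: "inj_on (pick V) {..<card V}"
  proof (intro inj_onI)
    fix a b assume ab: "a \<in> {..<card V}" "b \<in> {..<card V}" "pick V a = pick V b"
    show "a = b"
    proof (cases a b rule: linorder_cases)
      case less then show ?thesis using pick_mono[of b V a] ab by auto
    next
      case greater then show ?thesis using pick_mono[of a V b] ab by auto
    qed
  qed
  have sub: "pick V ` {..<card V} \<subseteq> V" using pick_in_set by auto
  have "card (pick V ` {..<card V}) = card V" using card_image[OF inj] by simp
  then have "pick V ` {..<card V} = V" using card_subset_eq[OF assms sub] by simp
  then show ?thesis using inj unfolding bij_betw_def by simp
qed

lemma pick_lessThan: "j < N \<Longrightarrow> pick {..<N} j = j"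
proof -
  assume j: "j < N"
  have "{a\<in>{..<N}. a < j} = {..<j}" using j by auto
  then show ?thesis using pick_card_in_set[of j "{..<N}"] j by simp
qed

lemma rowsub_cards:
  assumes V: "V \<subseteq> {..<dim_row D}"
  shows "card {i. i < dim_row D \<and> i \<in> V} = card V"
    and "card {j. j < dim_col D \<and> j \<in> {..<dim_col D}} = dim_col D"
proof -
  have "{i. i < dim_row D \<and> i \<in> V} = V" using V by blast
  then show "card {i. i < dim_row D \<and> i \<in> V} = card V" by (rule arg_cong)
  have "{j. j < dim_col D \<and> j \<in> {..<dim_col D}} = {..<dim_col D}" by blast
  then show "card {j. j < dim_col D \<and> j \<in> {..<dim_col D}} = dim_col D" by (metis card_lessThan)
qed

lemma rowsub_carrier:
  assumes V: "V \<subseteq> {..<dim_row D}"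
  shows "rowsub D V \<in> carrier_mat (card V) (dim_col D)"
  unfolding rowsub_def by (intro carrier_matI) (simp_all only: dim_submatrix rowsub_cards[OF V])

lemma rowsub_index:
  assumes V: "V \<subseteq> {..<dim_row D}" and i: "i < card V" and j: "j < dim_col D"
  shows "rowsub D V $$ (i,j) = D $$ (pick V i, j)"
proof -
  have "rowsub D V $$ (i,j) = D $$ (pick V i, pick {..<dim_col D} j)"
    unfolding rowsub_def by (rule submatrix_index) (use i j rowsub_cards[OF V] in simp_all)
  then show ?thesis using pick_lessThan[OF j] by simp
qed

lemma indep_rowsub:
  assumes V: "V \<subseteq> {..<dim_row D}"
  shows "indep (rowsub D V) {..<card V} \<longleftrightarrow> indep D V"
proof -
  let ?p = "pick V" and ?m = "card V" and ?M = "rowsub D V"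
  have finV: "finite V" using V finite_subset by blast
  have bij: "bij_betw ?p {..<?m} V" by (rule pick_bij[OF finV])
  have dc: "dim_col ?M = dim_col D" using rowsub_carrier[OF V] by simp
  have eq: "(\<Sum>i\<in>Q'. ?M $$ (i,n)) = (\<Sum>k\<in>?p ` Q'. D $$ (k,n))"
    if "Q' \<subseteq> {..<?m}" "n < dim_col D" for Q' n
  proof -
    have inj: "inj_on ?p Q'" using bij that(1) unfolding bij_betw_def by (meson inj_on_subset)
    have "(\<Sum>k\<in>?p ` Q'. D $$ (k,n)) = (\<Sum>i\<in>Q'. D $$ (?p i,n))" by (rule sum.reindex[OF inj, unfolded comp_def])
    also have "\<dots> = (\<Sum>i\<in>Q'. ?M $$ (i,n))"
    proof (intro sum.cong refl)
      fix i assume "i \<in> Q'"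
      then have "i < ?m" using that(1) by auto
      then show "D $$ (?p i,n) = ?M $$ (i,n)" by (rule sym[OF rowsub_index[OF V _ that(2)]])
    qed
    finally show ?thesis by (rule sym)
  qed
  have img_all: "?p ` {..<?m} = V" using bij unfolding bij_betw_def by (rule conjunct2)
  have injp: "inj_on ?p {..<?m}" using bij unfolding bij_betw_def by (rule conjunct1)
  show ?thesis
  proof
    assume ind: "indep ?M {..<?m}"
    show "indep D V" unfolding indep_def
    proof (intro allI impI)
      fix Q assume Q: "Q \<subseteq> V" "Q \<noteq> {}"
      define Q' where "Q' = ?p -` Q \<inter> {..<?m}"
      have "?p ` Q' = Q \<inter> ?p ` {..<?m}" unfolding Q'_def by blast
      then have img: "?p ` Q' = Q" using img_all Q(1) by (simp only: Int_absorb2)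
      have Q'sub: "Q' \<subseteq> {..<?m}" unfolding Q'_def by (rule Int_lower2)
      have "Q' \<noteq> {}" using img Q(2) by (metis image_empty)
      from indepD[OF ind Q'sub this] obtain n where n: "n < dim_col ?M" "(\<Sum>i\<in>Q'. ?M $$ (i,n)) \<noteq> 0"
        by blast
      have n': "n < dim_col D" using n(1) dc by (simp only:)
      have "(\<Sum>k\<in>Q. D $$ (k,n)) \<noteq> 0" using n(2) eq[OF Q'sub n'] img by (simp only: not_False_eq_True)
      then show "\<exists>n<dim_col D. (\<Sum>k\<in>Q. D $$ (k, n)) \<noteq> 0" using n' by blast
    qed
  next
    assume ind: "indep D V"
    show "indep ?M {..<?m}" unfolding indep_def
    proof (intro allI impI)
      fix Q' assume Q': "Q' \<subseteq> {..<?m}" "Q' \<noteq> {}"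
      have s1: "?p ` Q' \<subseteq> V" using Q'(1) img_all by (metis image_mono)
      have s2: "?p ` Q' \<noteq> {}" using Q'(2) by (simp only: image_is_empty not_False_eq_True)
      from indepD[OF ind s1 s2] obtain n where n: "n < dim_col D" "(\<Sum>k\<in>?p ` Q'. D $$ (k,n)) \<noteq> 0"
        by blast
      have "(\<Sum>k\<in>Q'. ?M $$ (k, n)) \<noteq> 0" using n(2) eq[OF Q'(1) n(1)] by (simp only: not_False_eq_True)
      then show "\<exists>n<dim_col ?M. (\<Sum>k\<in>Q'. ?M $$ (k, n)) \<noteq> 0" using n(1) dc by auto
    qed
  qed
qed

lemma rank_rowsub_iff:
  assumes V: "V \<subseteq> {..<dim_row D}"
  shows "rank2 (rowsub D V) = card V \<longleftrightarrow> indep D V"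
proof
  assume "rank2 (rowsub D V) = card V"
  then show "indep D V" using full_rank_indep[OF rowsub_carrier[OF V]] indep_rowsub[OF V] by simp
next
  assume "indep D V"
  then have "indep (rowsub D V) {..<card V}" using indep_rowsub[OF V] by simp
  then have "card {..<card V} \<le> rank2 (rowsub D V)"
    using rank_ge_indep[OF rowsub_carrier[OF V]] by blast
  then show "rank2 (rowsub D V) = card V" using rank_le_rows[OF rowsub_carrier[OF V]] by simp
qed

lemma indep_le_rank:
  assumes U: "U \<subseteq> {..<dim_row D}" and ind: "indep D U"
  shows "card U \<le> rank2 D"
  by (rule rank_ge_indep[OF _ U ind]) (rule carrier_matI; rule refl)




lemma bit3: "(y::bit) + z = (x + y) + (x + z)"
  by (cases x; cases y; cases z) simp_all

lemma bit_eq_of_sum0: "(x::bit) + y = 0 \<Longrightarrow> x = y"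
  by (cases x; cases y) simp_all

lemma sum_symdiff:
  fixes f :: "nat \<Rightarrow> bit"
  assumes "finite P" "finite Q"
  shows "(\<Sum>i\<in>(P-Q)\<union>(Q-P). f i) = (\<Sum>i\<in>P. f i) + (\<Sum>i\<in>Q. f i)"
proof -
  have a: "sum f P = sum f (P\<inter>Q) + sum f (P-Q)" by (rule sum.Int_Diff[OF assms(1)])
  have b: "sum f Q = sum f (P\<inter>Q) + sum f (Q-P)" using sum.Int_Diff[OF assms(2), of f P] by (simp add: Int_commute)
  have c: "sum f ((P-Q)\<union>(Q-P)) = sum f (P-Q) + sum f (Q-P)" by (rule sum.union_disjoint) (use assms in auto)
  show ?thesis unfolding a b c by (rule bit3)
qed


lemma key:
  assumes U: "U \<subseteq> {..<dim_row D}" "card U = Suc r"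
    and bound: "\<And>X. X \<subseteq> U \<Longrightarrow> indep D X \<Longrightarrow> card X \<le> r"
    and n: "n < dim_col D"
  shows "(\<Sum>k\<in>{k\<in>U. indep D (U - {k})}. D $$ (k,n)) = 0"
proof (cases "{k\<in>U. indep D (U - {k})} = {}")
  case True then show ?thesis by (metis sum.empty)
next
  case False
  then obtain k0 where k0: "k0 \<in> U" "indep D (U - {k0})" by blast
  have finU: "finite U" using U(1) finite_subset by blast
  have "\<not> indep D U"
  proof
    assume "indep D U" then have "card U \<le> r" by (rule bound[OF subset_refl])
    then show False using U(2) by simp
  qed
  then obtain Q where Q: "Q \<subseteq> U" "Q \<noteq> {}" "\<forall>n<dim_col D. (\<Sum>k\<in>Q. D $$ (k,n)) = 0"
    unfolding indep_def by auto
  have finQ: "finite Q" using Q(1) finU finite_subset by blast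
  have dir1: "k \<in> Q" if k: "k \<in> U" "indep D (U - {k})" for k
  proof (rule ccontr)
    assume "k \<notin> Q" then have "Q \<subseteq> U - {k}" using Q by auto
    from indepD[OF k(2) this Q(2)] show False using Q(3) by blast
  qed
  have k0Q: "k0 \<in> Q" using dir1[OF k0] .
  have dir2: "indep D (U - {k})" if kQ: "k \<in> Q" for k
    unfolding indep_def
  proof (intro allI impI, rule ccontr)
    fix P assume P: "P \<subseteq> U - {k}" "P \<noteq> {}" "\<not> (\<exists>n<dim_col D. (\<Sum>k\<in>P. D $$ (k,n)) \<noteq> 0)"
    have finP: "finite P" using P(1) finU finite_subset by blast
    have k0P: "k0 \<in> P"
    proof (rule ccontr)
      assume "k0 \<notin> P" then have "P \<subseteq> U - {k0}" using P(1) by auto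
      from indepD[OF k0(2) this P(2)] show False using P(3) by blast
    qed
    define X where "X = (P - Q) \<union> (Q - P)"
    have "X \<subseteq> U - {k0}" unfolding X_def using P(1) Q(1) k0P k0Q by auto
    moreover have "X \<noteq> {}" unfolding X_def using kQ P(1) by auto
    moreover have "\<forall>n<dim_col D. (\<Sum>i\<in>X. D $$ (i,n)) = 0"
    proof (intro allI impI)
      fix n assume "n < dim_col D"
      then show "(\<Sum>i\<in>X. D $$ (i,n)) = 0"
        unfolding X_def sum_symdiff[OF finP finQ] using P(3) Q(3) by auto
    qed
    ultimately show False using indepD[OF k0(2)] by blast
  qed
  have eq: "{k\<in>U. indep D (U - {k})} = Q" using dir1 dir2 Q(1) by blast
  show ?thesis unfolding eq using Q(3) n by blast
qed




theorem mainTheorem6: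
  fixes D :: "bit mat" and t :: nat and L A :: "nat set"
    and F :: "nat \<Rightarrow> nat set \<Rightarrow> 'm::finite \<Rightarrow> bit"
  assumes "t < dim_row D"
    and "L \<subseteq> {..<dim_row D}"
    and "card L = rank2 (rowsub D L)"
    and "rank2 (rowsub D L) = rank2 D"
    and "A \<subseteq> {..<dim_row D} - L"
    and "card A = t + 1"
  shows "(\<lambda>j. \<Sum>V\<in>Vfam D L (L \<union> A). msg D F ((L \<union> A) - V) j) = (\<lambda>j. 0)
    \<and> msg D F A = (\<lambda>j. \<Sum>V\<in>Vfam D L (L \<union> A) - {L}. msg D F ((L \<union> A) - V) j)
    \<and> (\<forall>V\<in>Vfam D L (L \<union> A) - {L}. ((L \<union> A) - V) \<inter> L \<noteq> {})"
proof -
  define B where "B = L \<union> A"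
  define r where "r = card L"
  define N where "N = dim_col D"
  define FF where "FF = Vfam D L B"
  define UU where "UU = {U. U \<subseteq> B \<and> card U = Suc r}"
  define SU where "SU U = {k\<in>U. indep D (U - {k})}" for U
  have Bsub: "B \<subseteq> {..<dim_row D}" unfolding B_def using assms(2,5) by auto
  have finB: "finite B" using Bsub finite_subset by blast
  have BL: "B - L = A" unfolding B_def using assms(5) by auto
  have rD: "rank2 D = r" unfolding r_def using assms(3,4) by simp
  have FF_char: "V \<in> FF \<longleftrightarrow> V \<subseteq> B \<and> card V = r \<and> indep D V" for V
  proof -
    have "V \<subseteq> B \<Longrightarrow> card V = r \<Longrightarrow> rank2 (rowsub D V) = r \<longleftrightarrow> indep D V"
      using rank_rowsub_iff[of V D] Bsub by auto
    then show ?thesis unfolding FF_def Vfam_def r_def by auto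
  qed
  have LFF: "L \<in> FF" unfolding FF_def Vfam_def B_def using assms(3) by auto
  have finFF: "finite FF" using finB by (rule finite_subset[rotated, OF finite_Pow_iff[THEN iffD2]]) (auto simp: FF_char)
  have finUU: "finite UU" using finB by (rule finite_subset[rotated, OF finite_Pow_iff[THEN iffD2]]) (auto simp: UU_def)
  have bound: "\<And>X. X \<subseteq> B \<Longrightarrow> indep D X \<Longrightarrow> card X \<le> r"
    using indep_le_rank Bsub rD by (metis subset_trans)
  have Z: "(\<Sum>V\<in>FF. msg D F (B - V) j) = 0" for j
  proof -
    define h where "h V k = (\<Sum>n<N. D $$ (k,n) * F n (B - V - {k}) j)" for V k
    define g where "g U k = (\<Sum>n<N. D $$ (k,n) * F n (B - U) j)" for U k
    have "(\<Sum>V\<in>FF. msg D F (B - V) j) = (\<Sum>V\<in>FF. \<Sum>k\<in>B - V. h V k)"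
      unfolding msg_def blk_def h_def N_def by simp
    also have "\<dots> = (\<Sum>(V,k)\<in>Sigma FF (\<lambda>V. B - V). h V k)"
      by (rule sum.Sigma[OF finFF]) (use finB in auto)
    also have "\<dots> = (\<Sum>(U,k)\<in>Sigma UU SU. g U k)"
    proof (rule sum.reindex_bij_witness[where j = "\<lambda>(V,k). (insert k V, k)" and i = "\<lambda>(U,k). (U - {k}, k)"], goal_cases)
      case (1 b)
      obtain V k where bk: "b = (V,k)" by fastforce
      have V: "V \<subseteq> B" "card V = r" "indep D V" "k \<in> B" "k \<notin> V" using 1 bk by (auto simp: FF_char)
      show ?case using bk V by auto
    next
      case (2 b)
      obtain V k where bk: "b = (V,k)" by fastforce
      have V: "V \<subseteq> B" "card V = r" "indep D V" "k \<in> B" "k \<notin> V" using 2 bk by (auto simp: FF_char)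
      have finV: "finite V" using V(1) finB finite_subset by blast
      have "insert k V - {k} = V" using V by auto
      then show ?case using bk V finV unfolding UU_def SU_def by auto
    next
      case (3 a)
      obtain U k where ak: "a = (U,k)" by fastforce
      have U: "U \<subseteq> B" "card U = Suc r" "k \<in> U" "indep D (U - {k})" using 3 ak unfolding UU_def SU_def by auto
      show ?case using ak U by auto
    next
      case (4 a)
      obtain U k where ak: "a = (U,k)" by fastforce
      have U: "U \<subseteq> B" "card U = Suc r" "k \<in> U" "indep D (U - {k})" using 4 ak unfolding UU_def SU_def by auto
      have finU: "finite U" using U(1) finB finite_subset by blast
      show ?case using ak U finU by (auto simp: FF_char)
    next
      case (5 b)
      obtain V k where bk: "b = (V,k)" by fastforce
      have "B - V - {k} = B - insert k V" by auto
      then show ?case using bk unfolding h_def g_def by simp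
    qed
    also have "\<dots> = (\<Sum>U\<in>UU. \<Sum>k\<in>SU U. g U k)"
      by (rule sum.Sigma[symmetric, OF finUU]) (auto simp: SU_def UU_def intro: finite_subset[OF _ finB])
    also have "\<dots> = (\<Sum>U\<in>UU. \<Sum>n<N. (\<Sum>k\<in>SU U. D $$ (k,n)) * F n (B - U) j)"
      unfolding g_def by (simp only: sum.swap[of _ "SU _"] sum_distrib_right)
    also have "\<dots> = 0"
    proof (rule sum.neutral, rule ballI, rule sum.neutral, rule ballI)
      fix U n assume U: "U \<in> UU" and n: "n \<in> {..<N}"
      have "(\<Sum>k\<in>SU U. D $$ (k,n)) = 0" unfolding SU_def
        by (rule key[of U D r n]) (use U n Bsub bound in \<open>auto simp: UU_def N_def\<close>)
      then show "(\<Sum>k\<in>SU U. D $$ (k,n)) * F n (B - U) j = 0" by simp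
    qed
    finally show ?thesis .
  qed
  have Zf: "(\<lambda>j. \<Sum>V\<in>FF. msg D F (B - V) j) = (\<lambda>j. 0)" by (rule ext) (rule Z)
  have G2: "msg D F A = (\<lambda>j. \<Sum>V\<in>FF - {L}. msg D F (B - V) j)"
  proof (rule ext)
    fix j
    have "(\<Sum>V\<in>FF. msg D F (B - V) j) = msg D F (B - L) j + (\<Sum>V\<in>FF - {L}. msg D F (B - V) j)"
      by (rule sum.remove[OF finFF LFF])
    then have "msg D F A j + (\<Sum>V\<in>FF - {L}. msg D F (B - V) j) = 0" using Z[of j] BL by simp
    then show "msg D F A j = (\<Sum>V\<in>FF - {L}. msg D F (B - V) j)" by (rule bit_eq_of_sum0)
  qed
  have G3: "\<forall>V\<in>FF - {L}. (B - V) \<inter> L \<noteq> {}"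
  proof
    fix V assume V: "V \<in> FF - {L}"
    then have V1: "V \<subseteq> B" "card V = r" using FF_char by auto
    have finV: "finite V" using V1(1) finB finite_subset by blast
    show "(B - V) \<inter> L \<noteq> {}"
    proof
      assume "(B - V) \<inter> L = {}"
      then have "L \<subseteq> V" using B_def by auto
      then have "L = V" using card_subset_eq[OF finV] V1(2) r_def by simp
      with V show False by auto
    qed
  qed
  show ?thesis using Zf G2 G3 unfolding FF_def B_def by blast
qed



end
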